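(* Let $m\ge7$ and $d\ge2$, and let $J$ be a set of jobs with size vectors $p_j\in\mathbb{R}^d_{\ge0}$ satisfying $p_{j,r}\in[0,1]$ for all $j\in J,r\in[d]$ and $\sum_{j\in J}p_{j,r}\le m\log d$ for all $r\in[d]$. Consider a random job set $S\subseteq J$ in which each job $j\in J$ is independently included with probability $q:=7/m$. Then with probability at least $1/2$, for all $r\in[d]$ we have $\sum_{j\in S}p_{j,r}\le14\log d$ and $\sum_{j\in J\setminus S}p_{j,r}\le(m-1)\log d$. *)

theory Defs
  imports "HOL-Probability.Probability"
begin

end

theory Submission
  imports Defs "HOL-Analysis.Analysis" begin

lemma exp_convex_bound:
  fixes s w :: real assumes "0 \<le> w" "w \<le> 1"
  shows "exp (s * w) \<le> 1 - w + w * exp s"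
proof -
  have "exp ((1 - w) * 0 + w * s) \<le> (1 - w) * exp 0 + w * exp s"
    using convex_onD[OF exp_convex, of w 0 s] assms by simp
  moreover have "exp (s * w) = exp ((1 - w) * 0 + w * s)" by (simp add: mult.commute)
  ultimately show ?thesis by (simp add: mult.commute[of s w])
qed

lemma mgf_bound:
  fixes J :: "'j set" and w :: "'j \<Rightarrow> real" and q s :: real
  assumes fin: "finite J" and q: "0 \<le> q" "q \<le> 1" and w: "\<And>j. j \<in> J \<Longrightarrow> 0 \<le> w j \<and> w j \<le> 1"
  shows "measure_pmf.expectation (Pi_pmf J False (\<lambda>_. bernoulli_pmf q))
            (\<lambda>b. exp (s * (\<Sum>j\<in>{j\<in>J. b j}. w j))) \<le> exp (q * (exp s - 1) * (\<Sum>j\<in>J. w j))"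
proof -
  have eq: "exp (s * (\<Sum>j\<in>{j\<in>J. b j}. w j)) = (\<Prod>j\<in>J. (\<lambda>j v. if v then exp (s * w j) else 1) j (b j))" for b
  proof -
    have h1: "(\<Sum>j\<in>{j\<in>J. b j}. w j) = (\<Sum>j\<in>J. if b j then w j else 0)"
      using fin by (simp add: sum.inter_filter)
    have "exp (s * (\<Sum>j\<in>{j\<in>J. b j}. w j)) = exp (\<Sum>j\<in>J. s * (if b j then w j else 0))"
      unfolding h1 sum_distrib_left ..
    also have "\<dots> = (\<Prod>j\<in>J. exp (s * (if b j then w j else 0)))"
      by (rule exp_sum[OF fin])
    also have "\<dots> = (\<Prod>j\<in>J. (\<lambda>j v. if v then exp (s * w j) else 1) j (b j))"
      by (rule prod.cong) simp_all
    finally show ?thesis .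
  qed
  have "measure_pmf.expectation (Pi_pmf J False (\<lambda>_. bernoulli_pmf q))
            (\<lambda>b. exp (s * (\<Sum>j\<in>{j\<in>J. b j}. w j)))
      = measure_pmf.expectation (Pi_pmf J False (\<lambda>_. bernoulli_pmf q))
            (\<lambda>b. \<Prod>j\<in>J. (\<lambda>j v. if v then exp (s * w j) else 1) j (b j))"
    by (simp only: eq)
  also have "\<dots> = (\<Prod>j\<in>J. measure_pmf.expectation (bernoulli_pmf q) (\<lambda>v. if v then exp (s * w j) else 1))"
    by (rule expectation_prod_Pi_pmf[OF fin]) (auto intro!: integrable_measure_pmf_finite)
  also have "\<dots> = (\<Prod>j\<in>J. exp (s * w j) * q + (1 - q))"
    using q by simp
  also have "\<dots> \<le> (\<Prod>j\<in>J. exp (q * (exp s - 1) * w j))"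
  proof (rule prod_mono)
    fix j assume j: "j \<in> J"
    have "0 \<le> exp (s * w j) * q + (1 - q)" using q by simp
    moreover have "exp (s * w j) * q + (1 - q) \<le> 1 + q * (exp s - 1) * w j"
    proof -
      have "exp (s * w j) * q \<le> (1 - w j + w j * exp s) * q"
        using exp_convex_bound[of "w j" s] w[OF j] q by (intro mult_right_mono) auto
      thus ?thesis by (simp add: algebra_simps)
    qed
    moreover have "1 + q * (exp s - 1) * w j \<le> exp (q * (exp s - 1) * w j)"
      using exp_ge_add_one_self by (simp add: add.commute)
    ultimately show "0 \<le> exp (s * w j) * q + (1 - q) \<and>
          exp (s * w j) * q + (1 - q) \<le> exp (q * (exp s - 1) * w j)" by linarith
  qed
  also have "\<dots> = exp (q * (exp s - 1) * (\<Sum>j\<in>J. w j))"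
    by (simp add: exp_sum[OF fin, symmetric] sum_distrib_left)
  finally show ?thesis .
qed

lemma ln2_ge: "9/13 \<le> ln (2::real)"
proof -
  have e: "exp 1 \<le> (2719/1000::real)"
    using e_approx_32 by (simp add: abs_if split: if_splits)
  have "exp (9/13::real) \<le> 2"
  proof (rule ccontr)
    assume "\<not> ?thesis"
    hence "2 ^ 13 < exp (9/13::real) ^ 13" by (intro power_strict_mono) auto
    also have "exp (9/13::real) ^ 13 = exp 1 ^ 9"
      by (simp flip: exp_of_nat_mult)
    also have "\<dots> \<le> (2719/1000) ^ 9" using e by (intro power_mono) auto
    finally show False by (simp add: power_divide)
  qed
  thus ?thesis by (subst ln_ge_iff) auto
qed

lemma ln7_le: "ln (7::real) \<le> 2"
proof -
  have e: "exp 1 \<ge> (27/10::real)"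
    using e_approx_32 by (simp add: abs_if split: if_splits)
  have "(7::real) \<le> (27/10)^2" by (simp add: power2_eq_square)
  also have "\<dots> \<le> exp 1 ^ 2" using e by (intro power_mono) auto
  also have "\<dots> = exp 2" by (simp flip: exp_of_nat_mult)
  finally have "ln 7 \<le> ln (exp (2::real))" by (intro ln_mono) auto
  thus ?thesis by simp
qed


lemma expdiv: "exp (x::real) / exp (- y) = exp (x + y)"
  by (simp add: exp_add exp_minus divide_inverse)

lemma markov_pmf:
  fixes M :: "'a pmf" and u :: "'a \<Rightarrow> real"
  assumes "finite (set_pmf M)" "\<And>x. 0 \<le> u x" "c > 0"
  shows "measure_pmf.prob M {x. c \<le> u x} \<le> measure_pmf.expectation M u / c"
  using integral_Markov_inequality_measure[of M u "{}" c] assms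
  by (simp add: integrable_measure_pmf_finite)

theorem lemma6:
  fixes J :: "'j set" and p :: "'j \<Rightarrow> nat \<Rightarrow> real" and m d :: nat
  assumes "m \<ge> 7" and "d \<ge> 2" and "finite J"
    and "\<And>j r. j \<in> J \<Longrightarrow> r \<in> {1..d} \<Longrightarrow> 0 \<le> p j r \<and> p j r \<le> 1"
    and "\<And>r. r \<in> {1..d} \<Longrightarrow> (\<Sum>j\<in>J. p j r) \<le> real m * ln (real d)"
  shows "measure_pmf.prob (Pi_pmf J False (\<lambda>_. bernoulli_pmf (7 / real m)))
           {b. \<forall>r\<in>{1..d}. (\<Sum>j\<in>{j\<in>J. b j}. p j r) \<le> 14 * ln (real d)
                          \<and> (\<Sum>j\<in>J - {j\<in>J. b j}. p j r) \<le> (real m - 1) * ln (real d)}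
         \<ge> 1 / 2"
proof -
  define q where "q = 7 / real m"
  define L where "L = ln (real d)"
  define M where "M = Pi_pmf J False (\<lambda>_. bernoulli_pmf q)"
  define X where "X = (\<lambda>b r. \<Sum>j\<in>{j\<in>J. b j}. p j r)"
  define T where "T = (\<lambda>r. \<Sum>j\<in>J. p j r)"
  have m7: "real m \<ge> 7" using assms(1) by simp
  have q01: "0 \<le> q" "q \<le> 1" using m7 by (auto simp: q_def)
  have d2: "real d \<ge> 2" using assms(2) by simp
  have ln2: "9/13 \<le> ln (2::real)" by (rule ln2_ge)
  have L2: "L \<ge> ln 2" unfolding L_def using d2 by simp
  have Lpos: "L > 0" using L2 ln2 by linarith
  have dL: "exp L = real d" unfolding L_def using d2 by simp
  have finM: "finite (set_pmf M)" unfolding M_def using assms(3)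
    by (subst set_Pi_pmf) auto
  have Xnn: "0 \<le> X b r" if "r \<in> {1..d}" for b r
    unfolding X_def using assms(4) that by (intro sum_nonneg) auto
  have XT: "(\<Sum>j\<in>J - {j\<in>J. b j}. p j r) = T r - X b r" for b r
    unfolding T_def X_def using assms(3) by (subst sum_diff) auto
  have qT: "q * T r \<le> 7 * L" if "r \<in> {1..d}" for r
  proof -
    have "q * T r \<le> q * (real m * L)"
      using assms(5)[OF that] q01 by (intro mult_left_mono) (auto simp: T_def L_def)
    also have "\<dots> = 7 * L" using m7 by (simp add: q_def)
    finally show ?thesis .
  qed
  have Tnn: "0 \<le> T r" if "r \<in> {1..d}" for r
    unfolding T_def using assms(4) that by (intro sum_nonneg) auto
  define A where "A = (\<lambda>r. {b. 14 * L < X b r})"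
  define B where "B = (\<lambda>r. {b. (real m - 1) * L < T r - X b r})"
  define c1 where "c1 = 7 - 14 * ln (2::real)"
  define c2 where "c2 = ln (7::real) - 6"
  have PA: "measure_pmf.prob M (A r) \<le> exp (L * c1)" if r: "r \<in> {1..d}" for r
  proof -
    have "A r \<subseteq> {b. exp (ln 2 * (14 * L)) \<le> exp (ln 2 * X b r)}"
      unfolding A_def by auto
    hence "measure_pmf.prob M (A r) \<le> measure_pmf.prob M {b. exp (ln 2 * (14 * L)) \<le> exp (ln 2 * X b r)}"
      by (intro measure_pmf.finite_measure_mono) auto
    also have "\<dots> \<le> measure_pmf.expectation M (\<lambda>b. exp (ln 2 * X b r)) / exp (ln 2 * (14 * L))"
      by (rule markov_pmf[OF finM]) auto
    also have "\<dots> \<le> exp (q * (exp (ln 2) - 1) * T r) / exp (ln 2 * (14 * L))"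
      unfolding M_def X_def T_def
      by (intro divide_right_mono mgf_bound assms(3) q01) (use assms(4) r in auto)
    also have "\<dots> = exp (q * T r - ln 2 * (14 * L))" by (simp add: exp_diff)
    also have "\<dots> \<le> exp (L * c1)" unfolding c1_def using qT[OF r]
      by (simp add: algebra_simps)
    finally show ?thesis .
  qed
  have PB: "measure_pmf.prob M (B r) \<le> exp (L * c2)" if r: "r \<in> {1..d}" for r
  proof -
    define a where "a = T r - (real m - 1) * L"
    have "B r \<subseteq> {b. exp (- ln 7 * a) \<le> exp (- ln 7 * X b r)}"
      unfolding B_def a_def by auto
    hence "measure_pmf.prob M (B r) \<le> measure_pmf.prob M {b. exp (- ln 7 * a) \<le> exp (- ln 7 * X b r)}"
      by (intro measure_pmf.finite_measure_mono) auto
    also have "\<dots> \<le> measure_pmf.expectation M (\<lambda>b. exp (- ln 7 * X b r)) / exp (- ln 7 * a)"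
      by (rule markov_pmf[OF finM]) auto
    also have "\<dots> \<le> exp (q * (exp (- ln 7) - 1) * T r) / exp (- ln 7 * a)"
      unfolding M_def X_def T_def
      by (intro divide_right_mono mgf_bound assms(3) q01) (use assms(4) r in auto)
    also have "\<dots> = exp (q * (exp (- ln 7) - 1) * T r + ln 7 * a)" by (subst mult_minus_left) (rule expdiv)
    also have "q * (exp (- ln 7) - 1) * T r + ln 7 * a = (real m * ln 7 - 6) * (T r / real m) + ln 7 * (real m - 1) * L * (-1)"
      using m7 by (simp add: q_def a_def exp_minus field_simps)
    also have "\<dots> \<le> L * c2"
    proof -
      have T1: "T r / real m \<le> L" using assms(5)[OF r] m7 by (simp add: T_def L_def field_simps)
      have "0 \<le> real m * ln 7 - 6"
      proof -
        have "ln 7 \<ge> (1::real)" using ln_ge_iff[of 7 1] exp_le by simp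
        hence "real m * 1 \<le> real m * ln 7" by (intro mult_left_mono) auto
        thus ?thesis using m7 by linarith
      qed
      hence "(real m * ln 7 - 6) * (T r / real m) \<le> (real m * ln 7 - 6) * L"
        using T1 by (intro mult_left_mono) auto
      thus ?thesis unfolding c2_def by (simp add: algebra_simps)
    qed
    finally show ?thesis by simp
  qed
  let ?E = "{b. \<forall>r\<in>{1..d}. (\<Sum>j\<in>{j\<in>J. b j}. p j r) \<le> 14 * ln (real d)
                          \<and> (\<Sum>j\<in>J - {j\<in>J. b j}. p j r) \<le> (real m - 1) * ln (real d)}"
  have compl: "UNIV - ?E = (\<Union>r\<in>{1..d}. A r \<union> B r)"
    unfolding A_def B_def XT by (auto simp: X_def L_def not_le)
  have "measure_pmf.prob M (UNIV - ?E) \<le> (\<Sum>r\<in>{1..d}. measure_pmf.prob M (A r \<union> B r))"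
    unfolding compl by (intro measure_pmf.finite_measure_subadditive_finite) auto
  also have "\<dots> \<le> (\<Sum>r\<in>{1..d}. exp (L * c1) + exp (L * c2))"
  proof (intro sum_mono)
    fix r assume r: "r \<in> {1..d}"
    have "measure_pmf.prob M (A r \<union> B r) \<le> measure_pmf.prob M (A r) + measure_pmf.prob M (B r)"
      by (intro measure_Un_le) auto
    thus "measure_pmf.prob M (A r \<union> B r) \<le> exp (L * c1) + exp (L * c2)"
      using PA[OF r] PB[OF r] by linarith
  qed
  also have "\<dots> = real d * exp (L * c1) + real d * exp (L * c2)"
    by (simp add: distrib_left)
  also have "\<dots> < 1 / 2"
  proof -
    have "exp (L * (1 + c1)) = exp L * exp (L * c1)" by (simp add: distrib_left exp_add)
    hence "real d * exp (L * c1) = exp (L * (1 + c1))" using dL by simp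
    also have "\<dots> \<le> exp (-1)"
    proof -
      have c1n: "1 + c1 \<le> -22/13" unfolding c1_def using ln2 by simp
      have "L * (1 + c1) \<le> (9/13) * (1 + c1)"
        by (rule mult_right_mono_neg) (use L2 ln2 c1n in auto)
      moreover have "(9/13) * (1 + c1) \<le> -1" using c1n by simp
      ultimately have "L * (1 + c1) \<le> -1" by linarith
      thus ?thesis by simp
    qed
    also have "\<dots> \<le> 10 / 27"
    proof -
      have e: "exp 1 \<ge> (27/10::real)" using e_approx_32 by (simp add: abs_if split: if_splits)
      have "exp (-1) = 1 / exp (1::real)" by (simp add: exp_minus inverse_eq_divide)
      also have "\<dots> \<le> 1 / (27/10)" using e by (intro divide_left_mono) auto
      finally show ?thesis by simp
    qed
    finally have 1: "real d * exp (L * c1) \<le> 10 / 27" .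
    have c2n: "c2 \<le> -4" unfolding c2_def using ln7_le by simp
    have "L * c2 \<le> L * (-4)" by (rule mult_left_mono) (use c2n Lpos in auto)
    hence "exp (L * c2) \<le> exp (L * (-4))" by simp
    hence "real d * exp (L * c2) \<le> real d * exp (L * (-4))" using d2 by (intro mult_left_mono) auto
    also have "real d * exp (L * (-4)) = 1 / real d ^ 3"
    proof -
      have p3: "exp L ^ 3 = exp (3 * L)" using exp_of_nat_mult[of 3 L] by simp
      have "exp L * exp (L * (-4)) * exp (3 * L) = exp (L + L * (-4) + 3 * L)" by (simp only: exp_add)
      also have "exp (L + L * (-4) + 3 * L) = 1" by simp
      finally have "exp L * exp (L * (-4)) * exp L ^ 3 = 1" by (simp only: p3)
      hence "real d * exp (L * (-4)) * real d ^ 3 = 1" using dL by simp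
      moreover have "real d ^ 3 > 0" using d2 by simp
      ultimately show ?thesis by (simp add: eq_divide_eq)
    qed
    also have "\<dots> \<le> 1 / 2 ^ 3" using d2
      by (intro divide_left_mono power_mono) auto
    finally have 2: "real d * exp (L * c2) \<le> 1/8" by simp
    show ?thesis using 1 2 by simp
  qed
  finally have "measure_pmf.prob M (UNIV - ?E) < 1/2" .
  moreover have "measure_pmf.prob M (UNIV - ?E) = 1 - measure_pmf.prob M ?E"
    using measure_pmf.prob_compl[of ?E M] by simp
  ultimately show ?thesis unfolding M_def q_def by simp
qed

end
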